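(* Let $\Omega$, $\psi$, $\varphi$, $\Sigma$, $S$ and $\Phi$ be as in the context. Then $\Phi:\Sigma\times[0,S)\to\Omega$ is a bijection, $\Phi^{-1}$ is Borel measurable, and for every Borel set $\mathcal B\subset\Omega$, $$\mu_\Omega(\mathcal B)=\frac1S\,(\mu_\Sigma\otimes\lambda)\big(\Phi^{-1}(\mathcal B)\big).$$
   Context: $\Omega$ is a commutative (written additively), compact, metrizable topological group, and $\psi:\mathbb R\to\Omega$ is a continuous group homomorphism whose image $\psi(\mathbb R)$ is dense in $\Omega$. $\mu_\Omega$ denotes the Haar probability measure of $\Omega$ (the unique translation-invariant Borel probability measure) and $\lambda$ is Lebesgue measure on $\mathbb R$. Let $\varphi:\Omega\to\mathbb S^1=\{z\in\mathbb C:|z|=1\}$ be a nontrivial continuous homomorphism (character), and $\Sigma=\ker\varphi=\{\omega:\varphi(\omega)=1\}$, a compact subgroup with Haar probability measure $\mu_\Sigma$. There is a unique $\alpha\neq0$ with $\varphi(\psi(t))=e^{i\alpha t}$ for all $t\in\mathbb R$; put $S=2\pi/|\alpha|$. Define $\Phi:\Sigma\times[0,S)\to\Omega$ by $\Phi(\sigma,t)=\sigma+\psi(t)$. *)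

theory Defs
  imports "HOL-Analysis.Analysis" "HOL-Probability.Probability"
begin

text \<open>A commutative compact metrizable topological group is modelled as a type of class
  metric_space and ab_group_add (the metric is a chosen compatible metric) whose
  group operations are continuous and whose universe is compact.\<close>

definition compact_metric_ab_group :: "('a::{metric_space, ab_group_add}) itself \<Rightarrow> bool" where
  "compact_metric_ab_group _ \<longleftrightarrow>
     compact (UNIV :: 'a set) \<and>
     continuous_on UNIV (\<lambda>p::'a \<times> 'a. fst p + snd p) \<and>
     continuous_on UNIV (\<lambda>x::'a. - x)"

definition haar_prob :: "('a::{topological_space, ab_group_add}) set \<Rightarrow> 'a measure \<Rightarrow> bool" where
  "haar_prob K \<mu> \<longleftrightarrow>
     prob_space \<mu> \<and> space \<mu> = K \<and> sets \<mu> = sets (restrict_space borel K) \<and>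
     (\<forall>x\<in>K. \<forall>A\<in>sets \<mu>. emeasure \<mu> ((\<lambda>y. x + y) ` A) = emeasure \<mu> A)"

definition character :: "('a::{topological_space, ab_group_add} \<Rightarrow> complex) \<Rightarrow> bool" where
  "character \<phi> \<longleftrightarrow> continuous_on UNIV \<phi> \<and> (\<forall>x. norm (\<phi> x) = 1) \<and>
     (\<forall>x y. \<phi> (x + y) = \<phi> x * \<phi> y)"

end

theory Submission
  imports Defs
begin

lemma compact_countable_basis:
  assumes "compact (UNIV::'a::metric_space set)"
  shows "\<exists>B::'a set set. countable B \<and> topological_basis B"
proof -
  from assms[unfolded compact_eq_totally_bounded]
  have T: "\<forall>e>0. \<exists>k::'a set. finite k \<and> UNIV \<subseteq> (\<Union>x\<in>k. ball x e)" by (rule conjunct2)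
  have "\<forall>e. \<exists>k::'a set. e > 0 \<longrightarrow> finite k \<and> UNIV \<subseteq> (\<Union>x\<in>k. ball x e)"
  proof
    fix e :: real
    show "\<exists>k::'a set. e > 0 \<longrightarrow> finite k \<and> UNIV \<subseteq> (\<Union>x\<in>k. ball x e)"
      using T by (cases "e > 0") auto
  qed
  then have "\<exists>k::real\<Rightarrow>'a set. \<forall>e. e > 0 \<longrightarrow> finite (k e) \<and> UNIV \<subseteq> (\<Union>x\<in>k e. ball x e)"
    by (rule choice)
  then obtain k :: "real \<Rightarrow> 'a set" where
    k: "\<And>e. e > 0 \<Longrightarrow> finite (k e) \<and> UNIV \<subseteq> (\<Union>x\<in>k e. ball x e)"
    by blast
  define B where "B = (\<Union>n::nat. (\<lambda>x. ball x (1/Suc n)) ` k (1/Suc n))"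
  have fk: "\<And>n::nat. finite (k (1/Suc n))" using k by simp
  have "countable B" unfolding B_def
    by (intro countable_UN[OF countableI_type] countable_image countable_finite fk)
  moreover have "topological_basis B"
  proof (rule topological_basisI)
    show "\<And>B'. B' \<in> B \<Longrightarrow> open B'" unfolding B_def by auto
  next
    fix O' :: "'a set" and x :: 'a assume "open O'" "x \<in> O'"
    then obtain e where e: "e > 0" "ball x e \<subseteq> O'" by (meson openE)
    obtain n :: nat where n: "1 / Suc n < e/2"
      using \<open>e>0\<close> by (metis half_gt_zero_iff nat_approx_posE)
    have "x \<in> (\<Union>c\<in>k (1/Suc n). ball c (1/Suc n))" using k[of "1/Suc n"] by (simp only: of_nat_0_less_iff zero_less_Suc zero_less_divide_1_iff simp_thms) blast
    then obtain c where c: "c \<in> k (1/Suc n)" "x \<in> ball c (1/Suc n)" by auto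
    have "ball c (1/Suc n) \<subseteq> O'"
    proof
      fix y assume "y \<in> ball c (1/Suc n)"
      then have "dist c y < 1/Suc n" by simp
      moreover have "dist x c < 1/Suc n" using c(2) by (simp add: dist_commute)
      ultimately have "dist x y < e" using n dist_triangle[of x y c] by linarith
      then show "y \<in> O'" using e by auto
    qed
    then show "\<exists>B'\<in>B. x \<in> B' \<and> B' \<subseteq> O'" using c unfolding B_def by (intro bexI[of _ "ball c (1/Suc n)"]) auto
  qed
  ultimately show ?thesis by blast
qed

lemma open_in_pair_borel:
  fixes W :: "('a::topological_space \<times> 'b::topological_space) set"
    and Ba :: "'a set set" and Bb :: "'b set set"
  assumes Ba: "countable Ba" "topological_basis Ba"
    and Bb: "countable Bb" "topological_basis Bb"
    and W: "open W"
  shows "W \<in> sets (borel \<Otimes>\<^sub>M borel)"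
proof -
  define C where "C = (\<lambda>(U::'a set,V::'b set). U \<times> V) ` {(U,V). U \<in> Ba \<and> V \<in> Bb \<and> U \<times> V \<subseteq> W}"
  have "countable C" unfolding C_def
    by (rule countable_image, rule countable_subset[of _ "Ba \<times> Bb"]) (auto simp: Ba Bb)
  moreover have "C \<subseteq> sets (borel \<Otimes>\<^sub>M borel)"
    unfolding C_def using Ba(2) Bb(2)
    by (auto intro!: pair_measureI borel_open simp: topological_basis_open)
  ultimately have "\<Union>C \<in> sets (borel \<Otimes>\<^sub>M borel)" by (rule sets.countable_Union)
  moreover have "\<Union>C = W"
  proof
    show "\<Union>C \<subseteq> W" unfolding C_def by auto
  next
    show "W \<subseteq> \<Union>C"
    proof
      fix p assume "p \<in> W"
      then obtain A A' where AA: "open A" "open A'" "p \<in> A \<times> A'" "A \<times> A' \<subseteq> W"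
        using W by (metis open_prod_elim)
      obtain U where U: "U \<in> Ba" "fst p \<in> U" "U \<subseteq> A"
        using topological_basisE[OF Ba(2) AA(1)] AA(3) by (metis mem_Times_iff)
      obtain V where V: "V \<in> Bb" "snd p \<in> V" "V \<subseteq> A'"
        using topological_basisE[OF Bb(2) AA(2)] AA(3) by (metis mem_Times_iff)
      have "U \<times> V \<subseteq> W" using U V AA by blast
      then have "U \<times> V \<in> C" unfolding C_def using U V by blast
      moreover have "p \<in> U \<times> V" using U V by (cases p) auto
      ultimately show "p \<in> \<Union>C" by blast
    qed
  qed
  ultimately show ?thesis by simp
qed

lemma id_pair_borel_measurable:
  assumes "\<exists>Ba::'a::topological_space set set. countable Ba \<and> topological_basis Ba"
    and "\<exists>Bb::'b::topological_space set set. countable Bb \<and> topological_basis Bb"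
  shows "(\<lambda>x. x) \<in> measurable (borel \<Otimes>\<^sub>M borel) (borel :: ('a \<times> 'b) measure)"
proof -
  obtain Ba :: "'a set set" where "countable Ba" "topological_basis Ba" using assms(1) by blast
  obtain Bb :: "'b set set" where "countable Bb" "topological_basis Bb" using assms(2) by blast
  show ?thesis
  proof (rule borel_measurableI)
    fix S :: "('a \<times> 'b) set" assume "open S"
    then have "S \<in> sets (borel \<Otimes>\<^sub>M borel)"
      by (rule open_in_pair_borel[OF \<open>countable Ba\<close> \<open>topological_basis Ba\<close> \<open>countable Bb\<close> \<open>topological_basis Bb\<close>])
    then show "(\<lambda>x. x) -` S \<inter> space (borel \<Otimes>\<^sub>M borel) \<in> sets (borel \<Otimes>\<^sub>M borel)"
      by (simp add: space_pair_measure)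
  qed
qed

lemma cont_pair_measurable:
  assumes "\<exists>Ba::'a::topological_space set set. countable Ba \<and> topological_basis Ba"
    and "\<exists>Bb::'b::topological_space set set. countable Bb \<and> topological_basis Bb"
    and h: "continuous_on UNIV (h :: 'a \<times> 'b \<Rightarrow> 'c::topological_space)"
    and f: "f \<in> measurable N borel" and g: "g \<in> measurable N borel"
  shows "(\<lambda>x. h (f x, g x)) \<in> borel_measurable N"
proof -
  have "(\<lambda>x. (f x, g x)) \<in> measurable N (borel \<Otimes>\<^sub>M borel)" using f g by measurable
  then have "(\<lambda>x. (f x, g x)) \<in> measurable N borel"
    using id_pair_borel_measurable[OF assms(1,2)] by (rule measurable_compose)
  then show ?thesis using borel_measurable_continuous_onI[OF h] by (rule measurable_compose)
qed


lemma cont_add_on: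
  fixes f g :: "'b::topological_space \<Rightarrow> 'a::{topological_space,plus}"
  assumes "continuous_on UNIV (\<lambda>p::'a::{topological_space,plus} \<times> 'a. fst p + snd p)"
    and "continuous_on S f" and "continuous_on S g"
  shows "continuous_on S (\<lambda>x. f x + g x)"
proof -
  have "continuous_on S (\<lambda>x. (f x, g x))" using assms(2,3) by (rule continuous_on_Pair)
  from continuous_on_compose2[of UNIV "\<lambda>p. fst p + snd p" S "\<lambda>x. (f x, g x)", OF assms(1) this]
  show ?thesis by simp
qed


lemma add_meas_lemma:
  fixes f g :: "'b \<Rightarrow> 'a::{metric_space, plus}"
  assumes cpt: "compact (UNIV::'a set)"
    and addc: "continuous_on UNIV (\<lambda>p::'a\<times>'a. fst p + snd p)"
    and f: "f \<in> borel_measurable N" and g: "g \<in> borel_measurable N"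
  shows "(\<lambda>x. f x + g x) \<in> borel_measurable N"
  using cont_pair_measurable[OF compact_countable_basis[OF cpt] compact_countable_basis[OF cpt] addc f g]
  by simp

lemma ind_prod_meas:
  fixes r :: "'b \<Rightarrow> real"
  assumes s: "s \<in> borel_measurable N" and B: "B \<in> sets borel" and r: "r \<in> borel_measurable N"
  shows "(\<lambda>x. indicator B (s x) * indicator {a..<b} (r x) :: ennreal) \<in> borel_measurable N"
proof -
  have [measurable]: "(\<lambda>x. indicator B (s x)::ennreal) \<in> borel_measurable N"
    using measurable_compose[OF s borel_measurable_indicator[OF B]] .
  have [measurable]: "(\<lambda>x. indicator {a..<b} (r x)::ennreal) \<in> borel_measurable N"
    using measurable_compose[OF r borel_measurable_indicator[of "{a..<b}" borel]] by simp
  show ?thesis by measurable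
qed

lemma periodic_shift:
  fixes h :: "real \<Rightarrow> ennreal"
  assumes hm[measurable]: "h \<in> borel_measurable borel"
    and per: "\<And>s. h (s + S) = h s" and t0: "0 \<le> t0" "t0 \<le> S"
  shows "(\<integral>\<^sup>+t. h (t0 + t) * indicator {0..<S} t \<partial>lborel)
       = (\<integral>\<^sup>+t. h t * indicator {0..<S} t \<partial>lborel)"
proof -
  have "(\<integral>\<^sup>+u. h u * indicator {0..<S} (u - t0) \<partial>lborel)
      = ennreal \<bar>1\<bar> * (\<integral>\<^sup>+x. h (t0 + 1 * x) * indicator {0..<S} (t0 + 1 * x - t0) \<partial>lborel)"
    by (rule nn_integral_real_affine) auto
  then have L: "(\<integral>\<^sup>+t. h (t0 + t) * indicator {0..<S} t \<partial>lborel)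
      = (\<integral>\<^sup>+u. h u * indicator {0..<S} (u - t0) \<partial>lborel)" by simp
  have split: "h u * indicator {0..<S} (u - t0) = h u * indicator {t0..<S} u + h u * indicator {S..<S+t0} u"
    for u using t0 by (auto simp: indicator_def)
  have "(\<integral>\<^sup>+u. h u * indicator {S..<S+t0} u \<partial>lborel)
      = ennreal \<bar>1\<bar> * (\<integral>\<^sup>+x. h (S + 1 * x) * indicator {S..<S+t0} (S + 1 * x) \<partial>lborel)"
    by (rule nn_integral_real_affine) auto
  also have "\<dots> = (\<integral>\<^sup>+x. h (S + x) * indicator {S..<S+t0} (S + x) \<partial>lborel)" by simp
  also have "\<dots> = (\<integral>\<^sup>+x. h x * indicator {0..<t0} x \<partial>lborel)"
    using per by (intro nn_integral_cong) (auto simp: indicator_def add.commute)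
  finally have R: "(\<integral>\<^sup>+u. h u * indicator {S..<S+t0} u \<partial>lborel) = (\<integral>\<^sup>+x. h x * indicator {0..<t0} x \<partial>lborel)" .
  have split2: "h u * indicator {0..<S} u = h u * indicator {t0..<S} u + h u * indicator {0..<t0} u"
    for u using t0 by (auto simp: indicator_def)
  show ?thesis
    unfolding L split split2
    by (subst (1 2) nn_integral_add) (auto simp: R)
qed

theorem lemma2p2:
  fixes \<psi> :: "real \<Rightarrow> 'a::{metric_space, ab_group_add}"
    and \<phi> :: "'a \<Rightarrow> complex"
    and \<alpha> :: real
    and \<mu>\<Omega> \<mu>\<Sigma> :: "'a measure"
  assumes grp: "compact_metric_ab_group TYPE('a)"
    and \<psi>_cont: "continuous_on UNIV \<psi>"
    and \<psi>_hom: "\<And>s t. \<psi> (s + t) = \<psi> s + \<psi> t"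
    and \<psi>_dense: "closure (range \<psi>) = UNIV"
    and haar\<Omega>: "haar_prob UNIV \<mu>\<Omega>"
    and \<phi>_char: "character \<phi>"
    and \<phi>_nontriv: "\<exists>\<omega>. \<phi> \<omega> \<noteq> 1"
    and \<alpha>: "\<And>t. \<phi> (\<psi> t) = cis (\<alpha> * t)"
    and haar\<Sigma>: "haar_prob {\<omega>. \<phi> \<omega> = 1} \<mu>\<Sigma>"
  defines "S \<equiv> 2 * pi / \<bar>\<alpha>\<bar>"
  defines "\<Phi> \<equiv> (\<lambda>(\<sigma>, t). \<sigma> + \<psi> t)"
  shows "bij_betw \<Phi> ({\<omega>. \<phi> \<omega> = 1} \<times> {0..<S}) UNIV
       \<and> the_inv_into ({\<omega>. \<phi> \<omega> = 1} \<times> {0..<S}) \<Phi> \<in> borel_measurable borel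
       \<and> (\<forall>B \<in> sets borel.
            emeasure \<mu>\<Omega> B
              = ennreal (1 / S) * emeasure (\<mu>\<Sigma> \<Otimes>\<^sub>M lborel)
                  (\<Phi> -` B \<inter> ({\<omega>. \<phi> \<omega> = 1} \<times> {0..<S})))"
proof -
  define K where "K = {\<omega>. \<phi> \<omega> = 1}"
  have cpt: "compact (UNIV::'a set)"
    and addc: "continuous_on UNIV (\<lambda>p::'a\<times>'a. fst p + snd p)"
    and negc: "continuous_on UNIV (\<lambda>x::'a. - x)"
    using grp unfolding compact_metric_ab_group_def by auto
  have \<phi>c: "continuous_on UNIV \<phi>" and \<phi>n: "\<And>x. norm (\<phi> x) = 1"
    and \<phi>h: "\<And>x y. \<phi> (x + y) = \<phi> x * \<phi> y"
    using \<phi>_char unfolding character_def by auto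
  have cnjmult: "cnj (\<phi> x) * \<phi> x = 1" for x
  proof -
    show ?thesis using complex_norm_square[of "\<phi> x"] \<phi>n[of x] by (simp add: mult.commute)
  qed
  have \<phi>0: "\<phi> 0 = 1"
  proof -
    have "\<phi> 0 * 1 = \<phi> 0 * \<phi> 0" using \<phi>h[of 0 0] by simp
    moreover have "\<phi> 0 \<noteq> 0" using \<phi>n[of 0] by auto
    ultimately show ?thesis by (metis mult_left_cancel)
  qed
  have \<phi>neg: "\<phi> (- x) = cnj (\<phi> x)" for x
  proof -
    have "\<phi> (-x) * \<phi> x = cnj (\<phi> x) * \<phi> x" using \<phi>h[of "-x" x] \<phi>0 cnjmult[of x] by simp
    moreover have "\<phi> x \<noteq> 0" using \<phi>n[of x] by auto
    ultimately show ?thesis by simp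
  qed
  have \<psi>0: "\<psi> 0 = 0" using \<psi>_hom[of 0 0] by simp
  have \<psi>neg: "\<psi> (- t) = - \<psi> t" for t
    using \<psi>_hom[of "-t" t] \<psi>0 by (simp add: eq_neg_iff_add_eq_0)
  have Kadd: "x \<in> K \<Longrightarrow> y \<in> K \<Longrightarrow> x + y \<in> K" for x y by (simp add: K_def \<phi>h)
  have Kneg: "x \<in> K \<Longrightarrow> - x \<in> K" for x by (simp add: K_def \<phi>neg)
  have Kclosed: "closed K" unfolding K_def
    by (rule closed_Collect_eq[OF \<phi>c continuous_on_const])
  have \<alpha>0: "\<alpha> \<noteq> 0"
  proof
    assume "\<alpha> = 0"
    then have "range \<psi> \<subseteq> K" using \<alpha> by (auto simp: K_def)
    then have "closure (range \<psi>) \<subseteq> K" using Kclosed by (rule closure_minimal)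
    then show False using \<psi>_dense \<phi>_nontriv by (auto simp: K_def)
  qed
  have Spos: "S > 0" using \<alpha>0 by (simp add: S_def)
  have absS: "\<bar>\<alpha>\<bar> * S = 2 * pi" using \<alpha>0 by (simp add: S_def)
  have \<psi>S: "\<psi> S \<in> K"
  proof -
    have "\<alpha> * S = 2 * pi \<or> \<alpha> * S = - (2 * pi)" using absS by (cases "\<alpha> > 0") auto
    then show ?thesis using \<alpha>[of S] by (auto simp: K_def complex_eq_iff)
  qed
  define zz where "zz = (\<lambda>w. if \<alpha> > 0 then w else cnj w)"
  define \<tau> where "\<tau> = (\<lambda>\<omega>. Arg2pi (zz (\<phi> \<omega>)) / \<bar>\<alpha>\<bar>)"
  define \<sigma>f where "\<sigma>f = (\<lambda>\<omega>. \<omega> + - \<psi> (\<tau> \<omega>))"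
  have cisArg: "norm w = 1 \<Longrightarrow> cis (Arg2pi w) = w" for w
    by (simp add: cis_conv_exp complex_norm_eq_1_exp)
  have zzn: "norm (zz (\<phi> \<omega>)) = 1" for \<omega> using \<phi>n[of \<omega>] by (simp add: zz_def)
  have \<tau>cis: "cis (\<alpha> * \<tau> \<omega>) = \<phi> \<omega>" for \<omega>
  proof (cases "\<alpha> > 0")
    case True
    then show ?thesis using cisArg[OF zzn[of \<omega>]] by (simp add: \<tau>_def zz_def)
  next
    case False
    then have "\<alpha> * \<tau> \<omega> = - Arg2pi (zz (\<phi> \<omega>))" using \<alpha>0 by (simp add: \<tau>_def)
    then have "cis (\<alpha> * \<tau> \<omega>) = cnj (cis (Arg2pi (zz (\<phi> \<omega>))))" by (simp add: cis_cnj)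
    then show ?thesis using cisArg[OF zzn[of \<omega>]] False by (simp add: zz_def)
  qed
  have \<tau>range: "0 \<le> \<tau> \<omega> \<and> \<tau> \<omega> < S" for \<omega>
  proof -
    have "0 \<le> Arg2pi (zz (\<phi> \<omega>))" "Arg2pi (zz (\<phi> \<omega>)) < 2 * pi" using Arg2pi by auto
    then show ?thesis using \<alpha>0 by (simp add: \<tau>_def S_def divide_strict_right_mono)
  qed
  have \<sigma>fK: "\<sigma>f \<omega> \<in> K" for \<omega>
  proof -
    have "\<phi> (\<sigma>f \<omega>) = \<phi> \<omega> * cnj (\<phi> (\<psi> (\<tau> \<omega>)))" by (simp only: \<sigma>f_def \<phi>h \<phi>neg)
    also have "\<dots> = 1" using \<tau>cis[of \<omega>] \<alpha> cnjmult[of \<omega>] by (simp add: mult.commute)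
    finally show ?thesis by (simp add: K_def)
  qed
  have \<Phi>\<sigma>f: "\<sigma>f \<omega> + \<psi> (\<tau> \<omega>) = \<omega>" for \<omega> by (simp add: \<sigma>f_def)
  have \<tau>\<Phi>: "\<tau> (\<sigma> + \<psi> t) = t" if "\<sigma> \<in> K" "0 \<le> t" "t < S" for \<sigma> t
  proof -
    have "\<phi> (\<sigma> + \<psi> t) = cis (\<alpha> * t)" using that(1) \<alpha>[of t] by (simp add: \<phi>h K_def)
    then have "zz (\<phi> (\<sigma> + \<psi> t)) = cis (\<bar>\<alpha>\<bar> * t)"
      by (cases "\<alpha> > 0") (auto simp: zz_def cis_cnj)
    moreover have "Arg2pi (cis (\<bar>\<alpha>\<bar> * t)) = \<bar>\<alpha>\<bar> * t"
    proof (rule Arg2pi_unique[of 1])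
      show "complex_of_real 1 * exp (\<i> * complex_of_real (\<bar>\<alpha>\<bar> * t)) = cis (\<bar>\<alpha>\<bar> * t)"
        by (simp add: cis_conv_exp)
      show "0 \<le> \<bar>\<alpha>\<bar> * t" using that by simp
      have "\<bar>\<alpha>\<bar> * t < \<bar>\<alpha>\<bar> * S" using that \<alpha>0 by simp
      then show "\<bar>\<alpha>\<bar> * t < 2 * pi" using absS by simp
    qed simp
    ultimately show ?thesis using \<alpha>0 by (simp add: \<tau>_def)
  qed
  define D where "D = K \<times> {0..<S}"
  have injD: "inj_on \<Phi> D"
  proof (rule inj_onI)
    fix p q assume "p \<in> D" "q \<in> D" "\<Phi> p = \<Phi> q"
    then obtain \<sigma> t \<sigma>' t' where pq: "p = (\<sigma>, t)" "q = (\<sigma>', t')" "\<sigma> \<in> K" "\<sigma>' \<in> K"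
      "0 \<le> t" "t < S" "0 \<le> t'" "t' < S" "\<sigma> + \<psi> t = \<sigma>' + \<psi> t'"
      unfolding D_def \<Phi>_def by auto
    then have "t = t'" using \<tau>\<Phi>[of \<sigma> t] \<tau>\<Phi>[of \<sigma>' t'] by metis
    with pq show "p = q" by simp
  qed
  have mapsD: "(\<sigma>f \<omega>, \<tau> \<omega>) \<in> D" for \<omega> using \<sigma>fK \<tau>range by (simp add: D_def)
  have \<Phi>inv: "\<Phi> (\<sigma>f \<omega>, \<tau> \<omega>) = \<omega>" for \<omega> by (simp add: \<Phi>_def \<Phi>\<sigma>f)
  have bij: "bij_betw \<Phi> D UNIV"
    unfolding bij_betw_def using injD mapsD \<Phi>inv by (auto intro!: image_eqI[of _ \<Phi>, OF \<Phi>inv[symmetric]])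
  have theinv: "the_inv_into D \<Phi> = (\<lambda>\<omega>. (\<sigma>f \<omega>, \<tau> \<omega>))"
    using the_inv_into_f_eq[OF injD \<Phi>inv mapsD] by auto
  have meas_inv: "(\<lambda>\<omega>. (\<sigma>f \<omega>, \<tau> \<omega>)) \<in> borel_measurable borel"
  proof -
    have eq: "(\<lambda>\<omega>. (\<sigma>f \<omega>, \<tau> \<omega>)) = (\<lambda>\<omega>. if \<omega> \<in> K then (\<omega>, 0) else (\<sigma>f \<omega>, \<tau> \<omega>))"
    proof (rule ext)
      fix \<omega> show "(\<sigma>f \<omega>, \<tau> \<omega>) = (if \<omega> \<in> K then (\<omega>, 0) else (\<sigma>f \<omega>, \<tau> \<omega>))"
      proof (cases "\<omega> \<in> K")
        case True
        then have "\<tau> (\<omega> + \<psi> 0) = 0" using Spos by (intro \<tau>\<Phi>) auto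
        then have "\<tau> \<omega> = 0" by (simp add: \<psi>0)
        then show ?thesis using True by (simp add: \<sigma>f_def \<psi>0)
      qed simp
    qed
    have c\<tau>: "continuous_on (- K) \<tau>"
    proof -
      have "continuous_on UNIV (\<lambda>\<omega>. zz (\<phi> \<omega>))"
        unfolding zz_def by (cases "\<alpha> > 0") (auto intro: \<phi>c continuous_on_cnj)
      then have c1: "continuous_on (- K) (\<lambda>\<omega>. zz (\<phi> \<omega>))" by (rule continuous_on_subset) simp
      have c2: "continuous_on ((\<lambda>\<omega>. zz (\<phi> \<omega>)) ` (- K)) Arg2pi"
      proof (rule continuous_at_imp_continuous_on, safe)
        fix \<omega> assume "\<omega> \<notin> K"
        show "isCont Arg2pi (zz (\<phi> \<omega>))"
        proof (rule continuous_at_Arg2pi)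
          show "zz (\<phi> \<omega>) \<notin> \<real>\<^sub>\<ge>\<^sub>0"
          proof
            assume "zz (\<phi> \<omega>) \<in> \<real>\<^sub>\<ge>\<^sub>0"
            then obtain r where r: "r \<ge> 0" "zz (\<phi> \<omega>) = complex_of_real r"
              by (auto simp: nonneg_Reals_def)
            then have "r = 1" using zzn[of \<omega>] by simp
            then have "zz (\<phi> \<omega>) = 1" using r by simp
            then have "\<phi> \<omega> = 1" by (cases "\<alpha> > 0") (auto simp: zz_def complex_cnj_one_iff)
            then show False using \<open>\<omega> \<notin> K\<close> by (simp add: K_def)
          qed
        qed
      qed
      have "continuous_on (- K) (\<lambda>\<omega>. Arg2pi (zz (\<phi> \<omega>)))"
        using continuous_on_compose2[OF c2 c1] by simp
      then show ?thesis unfolding \<tau>_def using \<alpha>0 by (intro continuous_intros) auto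
    qed
    have c\<sigma>: "continuous_on (- K) \<sigma>f"
    proof -
      have "continuous_on (- K) (\<lambda>\<omega>. \<psi> (\<tau> \<omega>))"
        using continuous_on_compose2[OF \<psi>_cont c\<tau>] by simp
      then have "continuous_on (- K) (\<lambda>\<omega>. - \<psi> (\<tau> \<omega>))"
        using continuous_on_compose2[OF negc] by fastforce
      then show ?thesis unfolding \<sigma>f_def
        by (intro cont_add_on[OF addc] continuous_on_id)
    qed
    show ?thesis unfolding eq
      by (rule borel_measurable_continuous_on_if)
        (auto intro!: continuous_intros c\<tau> c\<sigma> borel_closed Kclosed)
  qed
  have measure_part: "\<forall>B \<in> sets borel. emeasure \<mu>\<Omega> B
              = ennreal (1 / S) * emeasure (\<mu>\<Sigma> \<Otimes>\<^sub>M lborel) (\<Phi> -` B \<inter> D)"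
  proof
    fix B :: "'a set" assume B[measurable]: "B \<in> sets borel"
    have s\<Omega>: "sets \<mu>\<Omega> = sets borel" and sp\<Omega>: "space \<mu>\<Omega> = UNIV" and p\<Omega>: "prob_space \<mu>\<Omega>"
      and inv\<Omega>: "\<And>x A. A \<in> sets \<mu>\<Omega> \<Longrightarrow> emeasure \<mu>\<Omega> ((\<lambda>y. x + y) ` A) = emeasure \<mu>\<Omega> A"
      using haar\<Omega> unfolding haar_prob_def by auto
    have s\<Sigma>: "sets \<mu>\<Sigma> = sets (restrict_space borel K)" and sp\<Sigma>: "space \<mu>\<Sigma> = K"
      and p\<Sigma>: "prob_space \<mu>\<Sigma>"
      and inv\<Sigma>: "\<And>x A. x \<in> K \<Longrightarrow> A \<in> sets \<mu>\<Sigma> \<Longrightarrow> emeasure \<mu>\<Sigma> ((\<lambda>y. x + y) ` A) = emeasure \<mu>\<Sigma> A"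
      using haar\<Sigma> unfolding haar_prob_def K_def by auto
    interpret \<Omega>P: prob_space \<mu>\<Omega> by (rule p\<Omega>)
    interpret \<Sigma>P: prob_space \<mu>\<Sigma> by (rule p\<Sigma>)
    have sf\<Omega>: "sigma_finite_measure \<mu>\<Omega>" by (rule prob_space_imp_sigma_finite[OF p\<Omega>])
    have sf\<Sigma>: "sigma_finite_measure \<mu>\<Sigma>" by (rule prob_space_imp_sigma_finite[OF p\<Sigma>])
    define M where "M = \<mu>\<Sigma> \<Otimes>\<^sub>M (lborel::real measure)"
    have sfM: "sigma_finite_measure M" unfolding M_def
      by (intro sigma_finite_pair_measure sf\<Sigma> lborel.sigma_finite_measure_axioms)
    interpret P\<Sigma>: pair_sigma_finite \<mu>\<Sigma> "lborel::real measure"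
      by (intro pair_sigma_finite.intro sf\<Sigma> lborel.sigma_finite_measure_axioms)
    interpret P\<Omega>: pair_sigma_finite \<mu>\<Omega> M
      by (intro pair_sigma_finite.intro sf\<Omega> sfM)
    note am = add_meas_lemma[OF cpt addc]
    have id\<Omega>: "(\<lambda>x. x) \<in> measurable \<mu>\<Omega> borel" by (rule measurable_ident_sets[OF s\<Omega>])
    have id\<Sigma>: "(\<lambda>x. x) \<in> measurable \<mu>\<Sigma> borel"
    proof -
      have "(\<lambda>x. x) \<in> measurable (restrict_space borel K) (borel::'a measure)"
        by (rule measurable_restrict_space1[OF measurable_ident_sets[OF refl]])
      then show ?thesis by (subst measurable_cong_sets[OF s\<Sigma> refl])
    qed
    have \<psi>m: "\<psi> \<in> borel_measurable borel" by (rule borel_measurable_continuous_onI[OF \<psi>_cont])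
    have \<psi>ml: "\<psi> \<in> borel_measurable lborel" using \<psi>m by simp
    have spM: "space M = K \<times> UNIV" by (simp add: M_def space_pair_measure sp\<Sigma>)
    define g where "g = (\<lambda>p::'a \<times> ('a \<times> real).
       indicator B (fst p + fst (snd p) + \<psi> (snd (snd p))) * indicator {0..<S} (snd (snd p)) :: ennreal)"
    have gm: "g \<in> borel_measurable (\<mu>\<Omega> \<Otimes>\<^sub>M M)"
    proof -
      have m1: "(\<lambda>p. fst p) \<in> measurable (\<mu>\<Omega> \<Otimes>\<^sub>M M) borel"
        by (rule measurable_compose[OF _ id\<Omega>]) measurable
      have m2: "(\<lambda>p. fst (snd p)) \<in> measurable (\<mu>\<Omega> \<Otimes>\<^sub>M M) borel"
        by (rule measurable_compose[OF _ id\<Sigma>]) (simp add: M_def)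
      have m3': "(\<lambda>p. snd (snd p)) \<in> measurable (\<mu>\<Omega> \<Otimes>\<^sub>M M) borel"
        unfolding M_def by measurable
      have m3: "(\<lambda>p. \<psi> (snd (snd p))) \<in> measurable (\<mu>\<Omega> \<Otimes>\<^sub>M M) borel"
        by (rule measurable_compose[OF m3' \<psi>m])
      show ?thesis unfolding g_def
        by (rule ind_prod_meas[OF am[OF am[OF m1 m2] m3] B m3'])
    qed
    define J where "J = (\<lambda>\<omega>. \<integral>\<^sup>+x. g (\<omega>, x) \<partial>M)"
    have KM: "K \<in> sets \<mu>\<Sigma>" using sets.top[of \<mu>\<Sigma>] sp\<Sigma> by simp
    have KSM: "K \<times> {0..<S} \<in> sets M" unfolding M_def by (intro pair_measureI KM) auto
    have setsh: "\<And>c. {x. x + c \<in> B} = (\<lambda>y. - c + y) ` B"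
    proof -
      fix c :: 'a
      show "{x. x + c \<in> B} = (\<lambda>y. - c + y) ` B"
      proof safe
        fix x assume "x + c \<in> B"
        then show "x \<in> (\<lambda>y. - c + y) ` B" by (intro image_eqI[where x="x + c"]) (simp_all add: algebra_simps)
      qed (simp add: algebra_simps)
    qed
    have shift\<Omega>: "(\<integral>\<^sup>+x. indicator B (x + c) \<partial>\<mu>\<Omega>) = emeasure \<mu>\<Omega> B" for c
    proof -
      have "(\<lambda>x. x + c) \<in> borel_measurable \<mu>\<Omega>" by (rule am[OF id\<Omega> measurable_const]) simp
      from measurable_sets[OF this B] have st: "{x. x + c \<in> B} \<in> sets \<mu>\<Omega>"
        by (simp add: sp\<Omega> vimage_def)
      have "(\<integral>\<^sup>+x. indicator B (x + c) \<partial>\<mu>\<Omega>) = (\<integral>\<^sup>+x. indicator {x. x + c \<in> B} x \<partial>\<mu>\<Omega>)"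
        by (intro nn_integral_cong) (simp add: indicator_def)
      also have "\<dots> = emeasure \<mu>\<Omega> {x. x + c \<in> B}" using nn_integral_indicator[OF st] by simp
      also have "\<dots> = emeasure \<mu>\<Omega> B" unfolding setsh by (rule inv\<Omega>) (simp add: s\<Omega>)
      finally show ?thesis .
    qed
    have stepA: "(\<integral>\<^sup>+\<omega>. J \<omega> \<partial>\<mu>\<Omega>) = emeasure \<mu>\<Omega> B * ennreal S"
    proof -
      have "(\<integral>\<^sup>+\<omega>. J \<omega> \<partial>\<mu>\<Omega>) = integral\<^sup>N (\<mu>\<Omega> \<Otimes>\<^sub>M M) g"
        unfolding J_def by (rule sigma_finite_measure.nn_integral_fst[OF sfM gm])
      also have "\<dots> = (\<integral>\<^sup>+y. (\<integral>\<^sup>+x. g (x, y) \<partial>\<mu>\<Omega>) \<partial>M)" by (rule P\<Omega>.nn_integral_snd[OF gm, symmetric])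
      also have "\<dots> = (\<integral>\<^sup>+y. emeasure \<mu>\<Omega> B * indicator (K \<times> {0..<S}) y \<partial>M)"
      proof (rule nn_integral_cong)
        fix y assume y: "y \<in> space M"
        obtain \<sigma> t where yst: "y = (\<sigma>, t)" "\<sigma> \<in> K" using y spM by auto
        have "(\<integral>\<^sup>+x. g (x, y) \<partial>\<mu>\<Omega>) = (\<integral>\<^sup>+x. indicator B (x + (\<sigma> + \<psi> t)) * indicator {0..<S} t \<partial>\<mu>\<Omega>)"
          by (intro nn_integral_cong) (simp add: g_def yst add.assoc)
        also have "\<dots> = (\<integral>\<^sup>+x. indicator B (x + (\<sigma> + \<psi> t)) \<partial>\<mu>\<Omega>) * indicator {0..<S} t"
        proof (rule nn_integral_multc)
          have "(\<lambda>x. x + (\<sigma> + \<psi> t)) \<in> borel_measurable \<mu>\<Omega>" by (rule am[OF id\<Omega> measurable_const]) simp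
          then show "(\<lambda>x. indicator B (x + (\<sigma> + \<psi> t)) :: ennreal) \<in> borel_measurable \<mu>\<Omega>"
            by (rule measurable_compose[OF _ borel_measurable_indicator[OF B]])
        qed
        also have "\<dots> = emeasure \<mu>\<Omega> B * indicator (K \<times> {0..<S}) y"
          using shift\<Omega> yst by (simp add: indicator_def)
        finally show "(\<integral>\<^sup>+x. g (x, y) \<partial>\<mu>\<Omega>) = emeasure \<mu>\<Omega> B * indicator (K \<times> {0..<S}) y" .
      qed
      also have "\<dots> = emeasure \<mu>\<Omega> B * emeasure M (K \<times> {0..<S})"
        using KSM by (simp add: nn_integral_cmult nn_integral_indicator)
      also have "emeasure M (K \<times> {0..<S}) = ennreal S"
      proof -
        have "emeasure M (K \<times> {0..<S}) = emeasure \<mu>\<Sigma> K * emeasure lborel {0..<S}"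
          unfolding M_def
          by (rule sigma_finite_measure.emeasure_pair_measure_Times[OF lborel.sigma_finite_measure_axioms KM]) simp
        also have "\<dots> = ennreal S" using \<Sigma>P.emeasure_space_1 sp\<Sigma> Spos by simp
        finally show ?thesis .
      qed
      finally show ?thesis .
    qed
    define h where "h = (\<lambda>s. \<integral>\<^sup>+\<sigma>. indicator B (\<sigma> + \<psi> s) \<partial>\<mu>\<Sigma> :: ennreal)"
    have shift\<Sigma>: "(\<integral>\<^sup>+\<sigma>. indicator B (a + \<sigma> + c) \<partial>\<mu>\<Sigma>) = (\<integral>\<^sup>+\<sigma>. indicator B (\<sigma> + c) \<partial>\<mu>\<Sigma>)"
      if a: "a \<in> K" for a c
    proof -
      define A where "A = {\<sigma>\<in>K. \<sigma> + c \<in> B}"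
      define A' where "A' = {\<sigma>\<in>K. a + \<sigma> + c \<in> B}"
      have "(\<lambda>\<sigma>. \<sigma> + c) \<in> borel_measurable \<mu>\<Sigma>" by (rule am[OF id\<Sigma> measurable_const]) simp
      from measurable_sets[OF this B] have As: "A \<in> sets \<mu>\<Sigma>" by (simp add: sp\<Sigma> A_def vimage_def Int_def conj_commute)
      have "(\<lambda>\<sigma>. a + \<sigma> + c) \<in> borel_measurable \<mu>\<Sigma>"
        by (rule am[OF am[OF measurable_const id\<Sigma>] measurable_const]) simp_all
      from measurable_sets[OF this B] have As': "A' \<in> sets \<mu>\<Sigma>" by (simp add: sp\<Sigma> A'_def vimage_def Int_def conj_commute)
      have "A' = (\<lambda>y. - a + y) ` A"
      proof safe
        fix x assume "x \<in> A'"
        then have "a + x \<in> A" using a Kadd by (auto simp: A_def A'_def)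
        then show "x \<in> (\<lambda>y. - a + y) ` A" by (intro image_eqI[where x="a + x"]) simp_all
      next
        fix y assume "y \<in> A"
        then have "- a + y \<in> K" using Kadd[OF Kneg[OF a], of y] by (simp add: A_def)
        with \<open>y \<in> A\<close> show "- a + y \<in> A'" by (auto simp: A_def A'_def algebra_simps)
      qed
      then have eqm: "emeasure \<mu>\<Sigma> A' = emeasure \<mu>\<Sigma> A" using inv\<Sigma>[OF Kneg[OF a] As] by simp
      have "(\<integral>\<^sup>+\<sigma>. indicator B (a + \<sigma> + c) \<partial>\<mu>\<Sigma>) = (\<integral>\<^sup>+\<sigma>. indicator A' \<sigma> \<partial>\<mu>\<Sigma>)"
        by (intro nn_integral_cong) (auto simp: A'_def indicator_def sp\<Sigma>)
      also have "\<dots> = emeasure \<mu>\<Sigma> A'" using nn_integral_indicator[OF As'] by simp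
      also have "\<dots> = (\<integral>\<^sup>+\<sigma>. indicator A \<sigma> \<partial>\<mu>\<Sigma>)" using nn_integral_indicator[OF As] eqm by simp
      also have "\<dots> = (\<integral>\<^sup>+\<sigma>. indicator B (\<sigma> + c) \<partial>\<mu>\<Sigma>)"
        by (intro nn_integral_cong) (auto simp: A_def indicator_def sp\<Sigma>)
      finally show ?thesis .
    qed
    have Jform: "J \<omega> = (\<integral>\<^sup>+t. h (\<tau> \<omega> + t) * indicator {0..<S} t \<partial>lborel)" for \<omega>
    proof -
      have g\<omega>: "(\<lambda>x. g (\<omega>, x)) \<in> borel_measurable (\<mu>\<Sigma> \<Otimes>\<^sub>M lborel)"
        using measurable_compose_Pair1[OF _ gm, of \<omega>] sp\<Omega> by (simp add: M_def)
      have "J \<omega> = (\<integral>\<^sup>+t. (\<integral>\<^sup>+\<sigma>. g (\<omega>, (\<sigma>, t)) \<partial>\<mu>\<Sigma>) \<partial>lborel)"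
        unfolding J_def M_def using P\<Sigma>.nn_integral_snd[OF g\<omega>] by simp
      also have "\<dots> = (\<integral>\<^sup>+t. h (\<tau> \<omega> + t) * indicator {0..<S} t \<partial>lborel)"
      proof (rule nn_integral_cong)
        fix t :: real
        have "(\<integral>\<^sup>+\<sigma>. g (\<omega>, (\<sigma>, t)) \<partial>\<mu>\<Sigma>)
            = (\<integral>\<^sup>+\<sigma>. indicator B (\<sigma>f \<omega> + \<sigma> + \<psi> (\<tau> \<omega> + t)) * indicator {0..<S} t \<partial>\<mu>\<Sigma>)"
        proof (rule nn_integral_cong)
          fix \<sigma>
          have "\<omega> + \<sigma> + \<psi> t = (\<sigma>f \<omega> + \<psi> (\<tau> \<omega>)) + \<sigma> + \<psi> t" by (simp add: \<Phi>\<sigma>f)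
          also have "\<dots> = \<sigma>f \<omega> + \<sigma> + (\<psi> (\<tau> \<omega>) + \<psi> t)" by (simp add: ac_simps)
          also have "\<dots> = \<sigma>f \<omega> + \<sigma> + \<psi> (\<tau> \<omega> + t)" by (simp add: \<psi>_hom)
          finally have e: "\<omega> + \<sigma> + \<psi> t = \<sigma>f \<omega> + \<sigma> + \<psi> (\<tau> \<omega> + t)" .
          show "g (\<omega>, (\<sigma>, t)) = indicator B (\<sigma>f \<omega> + \<sigma> + \<psi> (\<tau> \<omega> + t)) * indicator {0..<S} t"
            by (simp only: g_def fst_conv snd_conv e)
        qed
        also have "\<dots> = (\<integral>\<^sup>+\<sigma>. indicator B (\<sigma>f \<omega> + \<sigma> + \<psi> (\<tau> \<omega> + t)) \<partial>\<mu>\<Sigma>) * indicator {0..<S} t"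
        proof (rule nn_integral_multc)
          have "(\<lambda>\<sigma>. \<sigma>f \<omega> + \<sigma> + \<psi> (\<tau> \<omega> + t)) \<in> borel_measurable \<mu>\<Sigma>"
            by (rule am[OF am[OF measurable_const id\<Sigma>] measurable_const]) simp_all
          then show "(\<lambda>\<sigma>. indicator B (\<sigma>f \<omega> + \<sigma> + \<psi> (\<tau> \<omega> + t)) :: ennreal) \<in> borel_measurable \<mu>\<Sigma>"
            by (rule measurable_compose[OF _ borel_measurable_indicator[OF B]])
        qed
        also have "\<dots> = h (\<tau> \<omega> + t) * indicator {0..<S} t"
          unfolding h_def by (simp add: shift\<Sigma>[OF \<sigma>fK])
        finally show "(\<integral>\<^sup>+\<sigma>. g (\<omega>, (\<sigma>, t)) \<partial>\<mu>\<Sigma>) = h (\<tau> \<omega> + t) * indicator {0..<S} t" .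
      qed
      finally show ?thesis .
    qed
    have hm: "h \<in> borel_measurable borel"
    proof -
      have f1: "(\<lambda>p::real \<times> 'a. snd p) \<in> borel_measurable (borel \<Otimes>\<^sub>M \<mu>\<Sigma>)"
        by (rule measurable_compose[OF _ id\<Sigma>]) simp
      have f2: "(\<lambda>p::real \<times> 'a. \<psi> (fst p)) \<in> borel_measurable (borel \<Otimes>\<^sub>M \<mu>\<Sigma>)"
        by (rule measurable_compose[OF _ \<psi>m]) simp
      have "(\<lambda>p::real \<times> 'a. indicator B (snd p + \<psi> (fst p)) :: ennreal) \<in> borel_measurable (borel \<Otimes>\<^sub>M \<mu>\<Sigma>)"
        by (rule measurable_compose[OF am[OF f1 f2] borel_measurable_indicator[OF B]])
      from sigma_finite_measure.borel_measurable_nn_integral_fst[OF sf\<Sigma> this]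
      show ?thesis by (simp add: h_def)
    qed
    have hper: "h (s + S) = h s" for s
    proof -
      have "h (s + S) = (\<integral>\<^sup>+\<sigma>. indicator B (\<psi> S + \<sigma> + \<psi> s) \<partial>\<mu>\<Sigma>)"
        unfolding h_def by (intro nn_integral_cong) (simp add: \<psi>_hom ac_simps)
      also have "\<dots> = h s" unfolding h_def by (rule shift\<Sigma>[OF \<psi>S])
      finally show ?thesis .
    qed
    have \<tau>0: "\<tau> 0 = 0"
      using \<tau>\<Phi>[of 0 0] Spos \<phi>0 by (simp add: K_def \<psi>0)
    have Jconst: "J \<omega> = J 0" for \<omega>
      unfolding Jform \<tau>0 using periodic_shift[OF hm hper, of "\<tau> \<omega>"] \<tau>range[of \<omega>] by simp
    have J0: "J 0 = emeasure M (\<Phi> -` B \<inter> D)"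
    proof -
      have \<Phi>eq: "\<Phi> = (\<lambda>x. fst x + \<psi> (snd x))" unfolding \<Phi>_def by (auto simp: fun_eq_iff)
      have f1: "(\<lambda>x. fst x) \<in> borel_measurable M"
        by (rule measurable_compose[OF _ id\<Sigma>]) (simp add: M_def)
      have f2: "(\<lambda>x. \<psi> (snd x)) \<in> borel_measurable M"
        by (rule measurable_compose[OF _ \<psi>m]) (simp add: M_def)
      have "\<Phi> -` B \<inter> space M \<in> sets M" unfolding \<Phi>eq by (rule measurable_sets[OF am[OF f1 f2] B])
      then have "(\<Phi> -` B \<inter> space M) \<inter> (K \<times> {0..<S}) \<in> sets M" using KSM by blast
      moreover have "(\<Phi> -` B \<inter> space M) \<inter> (K \<times> {0..<S}) = \<Phi> -` B \<inter> D"
        by (auto simp: spM D_def)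
      ultimately have st: "\<Phi> -` B \<inter> D \<in> sets M" by simp
      have "J 0 = (\<integral>\<^sup>+x. indicator (\<Phi> -` B \<inter> D) x \<partial>M)"
        unfolding J_def by (intro nn_integral_cong) (auto simp: g_def \<Phi>_def D_def spM indicator_def)
      also have "\<dots> = emeasure M (\<Phi> -` B \<inter> D)" using nn_integral_indicator[OF st] by simp
      finally show ?thesis .
    qed
    have "(\<integral>\<^sup>+\<omega>. J \<omega> \<partial>\<mu>\<Omega>) = J 0"
    proof -
      have "(\<integral>\<^sup>+\<omega>. J \<omega> \<partial>\<mu>\<Omega>) = (\<integral>\<^sup>+\<omega>. J 0 \<partial>\<mu>\<Omega>)"
        by (rule nn_integral_cong) (rule Jconst)
      then show ?thesis using \<Omega>P.emeasure_space_1 by simp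
    qed
    then have "emeasure M (\<Phi> -` B \<inter> D) = emeasure \<mu>\<Omega> B * ennreal S" using stepA J0 by simp
    then have "ennreal (1/S) * emeasure M (\<Phi> -` B \<inter> D) = emeasure \<mu>\<Omega> B * (ennreal (1/S) * ennreal S)"
      by (simp add: ac_simps)
    also have "ennreal (1/S) * ennreal S = 1" using Spos by (simp add: ennreal_mult[symmetric])
    finally show "emeasure \<mu>\<Omega> B = ennreal (1 / S) * emeasure (\<mu>\<Sigma> \<Otimes>\<^sub>M lborel) (\<Phi> -` B \<inter> D)"
      by (simp add: M_def)
  qed
  show ?thesis using bij meas_inv theinv measure_part unfolding D_def K_def by simp
qed

end
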